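(* Let $\langle \underline{S}, \mathcal{G}, l, u\rangle$ be a granular operator space (as defined in the context). Define the relation $\approx$ on $\wp(\underline{S})$ by $A \approx B$ if and only if $A^l = B^l$ and $A^u = B^u$, and on the quotient $\wp(\underline{S})|\approx$ define $\alpha \Subset \beta$ if and only if $\alpha^l \subseteq \beta^l$ and $\alpha^u \subseteq \beta^u$, where for an equivalence class $\alpha$, $\alpha^l$ and $\alpha^u$ denote the (common) lower and upper approximations of its members. Then $\Subset$ is a bounded partial order on $\wp(\underline{S})|\approx$, with least element the class of $\emptyset$ (whose approximations are $(\emptyset,\emptyset)$) and greatest element the class of $\underline{S}$ (whose approximations are $(\underline{S}^l, \underline{S}^u)$).
   Context: A granular operator space is a structure $\langle \underline{S}, \mathcal{G}, l, u\rangle$ where $\underline{S}$ is a set, $l, u : \wp(\underline{S}) \to \wp(\underline{S})$ are maps (written $a \mapsto a^l$, $a \mapsto a^u$), and $\mathcal{G} \subseteq \wp(\underline{S})$, such that for all $a, b \subseteq \underline{S}$: $a^l \subseteq a$, $a^{ll} = a^l$, $a^u \subseteq a^{uu}$; if $a \subseteq b$ then $a^l \subseteq b^l$ and $a^u \subseteq b^u$; $\emptyset^l = \emptyset$, $\emptyset^u = \emptyset$, $\underline{S}^l \subseteq \underline{S}$, $\underline{S}^u \subseteq \underline{S}$. Moreover $\mathcal{G}$ is an admissible granulation, i.e. (WRA) for every $a \subseteq \underline{S}$ there exist $b_1,\dots,b_r \in \mathcal{G}$ and a term $t$ built from $\cup, \cap$, complementation, $\underline{S}$ and $\emptyset$ with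 $t(b_1,\dots,b_r) = a^l$, and likewise there exist $b'_1,\dots,b'_s\in\mathcal{G}$ and such a term $t'$ with $t'(b'_1,\dots,b'_s) = a^u$; (LS) for every $b \in \mathcal{G}$ and every $a \subseteq \underline{S}$, if $b \subseteq a$ then $b \subseteq a^l$; (FU) for all $a, b \in \mathcal{G}$ there exists $z \subseteq \underline{S}$ with $a \subset z$, $b \subset z$ and $z^l = z^u = z$. *)

theory Defs
  imports Main
begin

datatype bterm = BVar nat | BUn bterm bterm | BInt bterm bterm | BCompl bterm
  | BTop | BBot

fun bvars :: "bterm \<Rightarrow> nat set" where
  "bvars (BVar i) = {i}"
| "bvars (BUn s t) = bvars s \<union> bvars t"
| "bvars (BInt s t) = bvars s \<union> bvars t"
| "bvars (BCompl s) = bvars s"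
| "bvars BTop = {}"
| "bvars BBot = {}"

fun beval :: "'a set \<Rightarrow> (nat \<Rightarrow> 'a set) \<Rightarrow> bterm \<Rightarrow> 'a set" where
  "beval S b (BVar i) = b i"
| "beval S b (BUn s t) = beval S b s \<union> beval S b t"
| "beval S b (BInt s t) = beval S b s \<inter> beval S b t"
| "beval S b (BCompl s) = S - beval S b s"
| "beval S b BTop = S"
| "beval S b BBot = {}"

definition term_repr :: "'a set \<Rightarrow> 'a set set \<Rightarrow> 'a set \<Rightarrow> bool" where
  "term_repr S G x \<longleftrightarrow> (\<exists>t b. (\<forall>i\<in>bvars t. b i \<in> G) \<and> beval S b t = x)"

definition granular_operator_space ::
  "'a set \<Rightarrow> 'a set set \<Rightarrow> ('a set \<Rightarrow> 'a set) \<Rightarrow> ('a set \<Rightarrow> 'a set) \<Rightarrow> bool" where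
  "granular_operator_space S G l u \<longleftrightarrow>
     G \<subseteq> Pow S \<and>
     (\<forall>a. a \<subseteq> S \<longrightarrow> l a \<subseteq> a \<and> l (l a) = l a \<and> u a \<subseteq> u (u a)) \<and>
     (\<forall>a b. a \<subseteq> S \<longrightarrow> b \<subseteq> S \<longrightarrow> a \<subseteq> b \<longrightarrow> l a \<subseteq> l b \<and> u a \<subseteq> u b) \<and>
     l {} = {} \<and> u {} = {} \<and> l S \<subseteq> S \<and> u S \<subseteq> S \<and>
     \<comment> \<open>(WRA)\<close>
     (\<forall>a. a \<subseteq> S \<longrightarrow> term_repr S G (l a) \<and> term_repr S G (u a)) \<and>
     \<comment> \<open>(LS)\<close>
     (\<forall>b\<in>G. \<forall>a. a \<subseteq> S \<longrightarrow> b \<subseteq> a \<longrightarrow> b \<subseteq> l a) \<and>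
     \<comment> \<open>(FU)\<close>
     (\<forall>a\<in>G. \<forall>b\<in>G. \<exists>z. z \<subseteq> S \<and> a \<subset> z \<and> b \<subset> z \<and> l z = z \<and> u z = z)"

definition rough_eq :: "'a set \<Rightarrow> ('a set \<Rightarrow> 'a set) \<Rightarrow> ('a set \<Rightarrow> 'a set) \<Rightarrow> 'a set rel" where
  "rough_eq S l u = {(A, B). A \<subseteq> S \<and> B \<subseteq> S \<and> l A = l B \<and> u A = u B}"

definition cls_l :: "('a set \<Rightarrow> 'a set) \<Rightarrow> 'a set set \<Rightarrow> 'a set" where
  "cls_l l \<alpha> = (THE X. \<forall>A\<in>\<alpha>. l A = X)"

definition cls_u :: "('a set \<Rightarrow> 'a set) \<Rightarrow> 'a set set \<Rightarrow> 'a set" where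
  "cls_u u \<alpha> = (THE X. \<forall>A\<in>\<alpha>. u A = X)"

definition cls_le :: "('a set \<Rightarrow> 'a set) \<Rightarrow> ('a set \<Rightarrow> 'a set) \<Rightarrow> 'a set set \<Rightarrow> 'a set set \<Rightarrow> bool" where
  "cls_le l u \<alpha> \<beta> \<longleftrightarrow> cls_l l \<alpha> \<subseteq> cls_l l \<beta> \<and> cls_u u \<alpha> \<subseteq> cls_u u \<beta>"

end

theory Submission
  imports Defs
begin

lemma cls_l_class:
  assumes "B \<subseteq> S"
  shows "cls_l l (rough_eq S l u `` {B}) = l B"
  unfolding cls_l_def
proof (rule the_equality)
  fix X assume "\<forall>A\<in>rough_eq S l u `` {B}. l A = X"
  moreover have "B \<in> rough_eq S l u `` {B}" using assms by (simp add: rough_eq_def)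
  ultimately show "X = l B" by simp
qed (auto simp: rough_eq_def)

lemma cls_u_class:
  assumes "B \<subseteq> S"
  shows "cls_u u (rough_eq S l u `` {B}) = u B"
  unfolding cls_u_def
proof (rule the_equality)
  fix X assume "\<forall>A\<in>rough_eq S l u `` {B}. u A = X"
  moreover have "B \<in> rough_eq S l u `` {B}" using assms by (simp add: rough_eq_def)
  ultimately show "X = u B" by simp
qed (auto simp: rough_eq_def)

lemma quot_elem:
  assumes "\<alpha> \<in> Pow S // rough_eq S l u"
  obtains A where "A \<subseteq> S" "\<alpha> = rough_eq S l u `` {A}"
  using assms by (auto simp: quotient_def)

lemma class_eq:
  assumes "A \<subseteq> S" "B \<subseteq> S" "l A = l B" "u A = u B"
  shows "rough_eq S l u `` {A} = rough_eq S l u `` {B}"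
  using assms by (auto simp: rough_eq_def)

theorem mainTheorem1:
  fixes S :: "'a set" and G :: "'a set set" and l u :: "'a set \<Rightarrow> 'a set"
  assumes "granular_operator_space S G l u"
  defines "Q \<equiv> Pow S // rough_eq S l u"
  shows "partial_order_on Q {(\<alpha>, \<beta>). \<alpha> \<in> Q \<and> \<beta> \<in> Q \<and> cls_le l u \<alpha> \<beta>}
    \<and> rough_eq S l u `` {{}} \<in> Q
    \<and> cls_l l (rough_eq S l u `` {{}}) = {} \<and> cls_u u (rough_eq S l u `` {{}}) = {}
    \<and> (\<forall>\<beta>\<in>Q. cls_le l u (rough_eq S l u `` {{}}) \<beta>)
    \<and> rough_eq S l u `` {S} \<in> Q
    \<and> cls_l l (rough_eq S l u `` {S}) = l S \<and> cls_u u (rough_eq S l u `` {S}) = u S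
    \<and> (\<forall>\<beta>\<in>Q. cls_le l u \<beta> (rough_eq S l u `` {S}))"
proof -
  have mono: "\<And>a b. a \<subseteq> S \<Longrightarrow> b \<subseteq> S \<Longrightarrow> a \<subseteq> b \<Longrightarrow> l a \<subseteq> l b \<and> u a \<subseteq> u b"
    and e: "l {} = {}" "u {} = {}"
  proof -
    have h: "(\<forall>a b. a \<subseteq> S \<longrightarrow> b \<subseteq> S \<longrightarrow> a \<subseteq> b \<longrightarrow> l a \<subseteq> l b \<and> u a \<subseteq> u b)
      \<and> l {} = {} \<and> u {} = {}"
      using assms(1) unfolding granular_operator_space_def by (elim conjE) (intro conjI)
    fix a b assume "a \<subseteq> S" "b \<subseteq> S" "a \<subseteq> b"
    then show "l a \<subseteq> l b \<and> u a \<subseteq> u b" using h by blast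
  next
    show "l {} = {}" "u {} = {}"
      using assms(1) unfolding granular_operator_space_def by simp_all
  qed
  have inQ: "\<And>A. A \<subseteq> S \<Longrightarrow> rough_eq S l u `` {A} \<in> Q"
    unfolding Q_def by (auto simp: quotient_def)
  have po: "partial_order_on Q {(\<alpha>, \<beta>). \<alpha> \<in> Q \<and> \<beta> \<in> Q \<and> cls_le l u \<alpha> \<beta>}"
    unfolding partial_order_on_def preorder_on_def refl_on_def trans_def antisym_def
  proof (intro conjI allI impI ballI)
    show "{(\<alpha>, \<beta>). \<alpha> \<in> Q \<and> \<beta> \<in> Q \<and> cls_le l u \<alpha> \<beta>} \<subseteq> Q \<times> Q" by auto
  next
    fix x assume "x \<in> Q" then show "(x, x) \<in> {(\<alpha>, \<beta>). \<alpha> \<in> Q \<and> \<beta> \<in> Q \<and> cls_le l u \<alpha> \<beta>}"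
      by (auto simp: cls_le_def)
  next
    fix x y z
    assume "(x, y) \<in> {(\<alpha>, \<beta>). \<alpha> \<in> Q \<and> \<beta> \<in> Q \<and> cls_le l u \<alpha> \<beta>}"
      "(y, z) \<in> {(\<alpha>, \<beta>). \<alpha> \<in> Q \<and> \<beta> \<in> Q \<and> cls_le l u \<alpha> \<beta>}"
    then show "(x, z) \<in> {(\<alpha>, \<beta>). \<alpha> \<in> Q \<and> \<beta> \<in> Q \<and> cls_le l u \<alpha> \<beta>}"
      by (auto simp: cls_le_def)
  next
    fix x y
    assume "(x, y) \<in> {(\<alpha>, \<beta>). \<alpha> \<in> Q \<and> \<beta> \<in> Q \<and> cls_le l u \<alpha> \<beta>}"
      "(y, x) \<in> {(\<alpha>, \<beta>). \<alpha> \<in> Q \<and> \<beta> \<in> Q \<and> cls_le l u \<alpha> \<beta>}"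
    then have h: "x \<in> Q" "y \<in> Q" "cls_le l u x y" "cls_le l u y x" by auto
    obtain A where A: "A \<subseteq> S" "x = rough_eq S l u `` {A}" using h(1) Q_def quot_elem by blast
    obtain B where B: "B \<subseteq> S" "y = rough_eq S l u `` {B}" using h(2) Q_def quot_elem by blast
    have "l A = l B" "u A = u B" using h(3,4) A B
      by (auto simp: cls_le_def cls_l_class cls_u_class)
    then show "x = y" using A B class_eq by metis
  qed
  have bot: "\<forall>\<beta>\<in>Q. cls_le l u (rough_eq S l u `` {{}}) \<beta>"
  proof
    fix \<beta> assume "\<beta> \<in> Q"
    then obtain B where B: "B \<subseteq> S" "\<beta> = rough_eq S l u `` {B}" using Q_def quot_elem by blast
    show "cls_le l u (rough_eq S l u `` {{}}) \<beta>"
      using B by (simp add: cls_le_def cls_l_class cls_u_class e)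
  qed
  have top: "\<forall>\<beta>\<in>Q. cls_le l u \<beta> (rough_eq S l u `` {S})"
  proof
    fix \<beta> assume "\<beta> \<in> Q"
    then obtain B where B: "B \<subseteq> S" "\<beta> = rough_eq S l u `` {B}" using Q_def quot_elem by blast
    show "cls_le l u \<beta> (rough_eq S l u `` {S})"
      using B mono[of B S] by (simp add: cls_le_def cls_l_class cls_u_class)
  qed
  show ?thesis using po bot top inQ[of "{}"] inQ[of S]
    by (simp add: cls_l_class cls_u_class e)
qed

end
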